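(* Let $d$ be a positive integer, let $a>0$, and let $x$ be a real number with $x>1-\frac{2}{d+1}$ (and $x<1$). Among all degree distributions $\gamma$ with average degree $a$ and maximal degree $d$, the one which maximizes $\gamma(x)$ has the form $\gamma(x)=\gamma_ix^{i-1}+\gamma_{i+1}x^{i}$, where $i=\lfloor a\rfloor$ is the largest integer smaller than $a$.
   Context: A degree distribution is a polynomial $\gamma(x)=\sum_{k\ge2}\gamma_kx^{k-1}$ with $\gamma_k\ge0$ and $\sum_k\gamma_k=1$; its maximal degree is the largest $k$ with $\gamma_k\ne0$, and its average degree $a$ is defined by $1/a=\int_0^1\gamma(x)\,dx$. *)

theory Defs
  imports Complex_Main
begin

text \<open>A degree distribution with maximal degree (at most) d, represented by its
coefficient sequence g :: nat => real, where g k is the coefficient gamma_k of x^(k-1).\<close>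
definition degree_dist :: "nat \<Rightarrow> (nat \<Rightarrow> real) \<Rightarrow> bool" where
  "degree_dist d g \<longleftrightarrow> (\<forall>k. 0 \<le> g k) \<and> (\<forall>k. k < 2 \<or> d < k \<longrightarrow> g k = 0)
     \<and> (\<Sum>k=2..d. g k) = 1"

definition dd_eval :: "nat \<Rightarrow> (nat \<Rightarrow> real) \<Rightarrow> real \<Rightarrow> real" where
  "dd_eval d g x = (\<Sum>k=2..d. g k * x ^ (k - 1))"

text \<open>Average degree a: 1/a = integral over [0,1] of gamma, which equals sum of gamma_k / k.\<close>
definition avg_degree :: "nat \<Rightarrow> (nat \<Rightarrow> real) \<Rightarrow> real \<Rightarrow> bool" where
  "avg_degree d g a \<longleftrightarrow> 1 / a = (\<Sum>k=2..d. g k / real k)"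

definition feasible_dd :: "nat \<Rightarrow> real \<Rightarrow> (nat \<Rightarrow> real) \<Rightarrow> bool" where
  "feasible_dd d a g \<longleftrightarrow> degree_dist d g \<and> avg_degree d g a"

definition maximizer_dd :: "nat \<Rightarrow> real \<Rightarrow> real \<Rightarrow> (nat \<Rightarrow> real) \<Rightarrow> bool" where
  "maximizer_dd d a x g \<longleftrightarrow> feasible_dd d a g \<and>
     (\<forall>h. feasible_dd d a h \<longrightarrow> dd_eval d h x \<le> dd_eval d g x)"

end

theory Submission
  imports Defs
begin

definition Dfun :: "real \<Rightarrow> nat \<Rightarrow> real" where
  "Dfun x k = x^(k-1)*((real k+1)*x - real k)"

definition Ffun :: "real \<Rightarrow> nat \<Rightarrow> nat \<Rightarrow> real" where
  "Ffun x i k = Dfun x i * real k + (real i * x^(i-1) - real i * Dfun x i) - real k * x^(k-1)"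

lemma D_step:
  fixes x :: real and d m :: nat
  assumes "1 - 2/(real d+1) < x" "x<1" "0<x" "m+2 \<le> d"
  shows "Dfun x (m+2) < Dfun x (m+1)"
proof -
  have le: "2*(real m+3)/(real d+1) \<le> 2" using assms(4) by (simp add: divide_simps)
  have "(real m+3)*(1 - 2/(real d+1)) < (real m+3)*x"
    using assms(1) by (intro mult_strict_left_mono) auto
  moreover have "(real m+3)*(1 - 2/(real d+1)) = real m + 3 - 2*(real m+3)/(real d+1)"
    by (simp add: algebra_simps)
  ultimately have "(real m+3)*x > real m + 3 - 2*(real m+3)/(real d+1)" by linarith
  then have pos: "(real m+3)*x - (real m+1) > 0" using le by linarith
  have eq: "Dfun x (m+1) - Dfun x (m+2) = x^m*((1-x)*((real m+3)*x - (real m+1)))"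
    unfolding Dfun_def by (simp add: algebra_simps)
  have "x^m*((1-x)*((real m+3)*x - (real m+1))) > 0"
    using pos assms(2,3) by simp
  then show ?thesis using eq by linarith
qed

lemma D_mono:
  fixes x :: real and d j k :: nat
  assumes "1 - 2/(real d+1) < x" "x<1" "0<x" "1 \<le> j" "j < k" "k \<le> d"
  shows "Dfun x k < Dfun x j"
  using assms(5,6)
proof (induction k)
  case 0 then show ?case by simp
next
  case (Suc k)
  obtain m where m: "k = m+1" using Suc.prems assms(4) by (metis add.commute less_Suc_eq_le le_Suc_ex le_trans)
  have st: "Dfun x (Suc k) < Dfun x k"
    using D_step[OF assms(1,2,3), of m] Suc.prems m by simp
  show ?case
  proof (cases "j = k")
    case True then show ?thesis using st by simp
  next
    case False
    then have "Dfun x k < Dfun x j" using Suc by simp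
    then show ?thesis using st by linarith
  qed
qed

lemma F_step:
  assumes "1 \<le> k"
  shows "Ffun x i (k+1) = Ffun x i k + Dfun x i - Dfun x k"
proof -
  obtain m where "k = Suc m" using assms by (metis Suc_le_D One_nat_def)
  then show ?thesis unfolding Ffun_def Dfun_def by (simp add: algebra_simps)
qed

lemma F_zero: "Ffun x i i = 0"
  unfolding Ffun_def by (simp add: algebra_simps)

lemma F_up:
  fixes x :: real and d i k :: nat
  assumes "1 - 2/(real d+1) < x" "x<1" "0<x" "1 \<le> i"
  shows "i+1 \<le> k \<Longrightarrow> k \<le> d \<Longrightarrow> Ffun x i k \<ge> 0 \<and> (i+2 \<le> k \<longrightarrow> Ffun x i k > 0)"
proof (induction k)
  case 0 then show ?case by simp
next
  case (Suc k)
  show ?case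
  proof (cases "k = i")
    case True
    then show ?thesis using F_step[of i x i] F_zero[of x i] assms(4) by simp
  next
    case False
    then have ih: "Ffun x i k \<ge> 0" using Suc by simp
    have "Dfun x k < Dfun x i" using D_mono[OF assms(1,2,3) assms(4), of k] Suc.prems False by simp
    then have "Ffun x i (Suc k) > Ffun x i k" using F_step[of k x i] Suc.prems assms(4) by simp
    then show ?thesis using ih by simp
  qed
qed

lemma F_down:
  fixes x :: real and d i k :: nat
  assumes "1 - 2/(real d+1) < x" "x<1" "0<x" "i \<le> d"
  shows "1 \<le> k \<Longrightarrow> k \<le> i \<Longrightarrow> Ffun x i k \<ge> 0 \<and> (k < i \<longrightarrow> Ffun x i k > 0)"
proof (induction "i - k" arbitrary: k)
  case 0 then show ?case using F_zero[of x i] by simp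
next
  case (Suc n)
  then have "n = i - (k+1)" "1 \<le> k+1" "k+1 \<le> i" by auto
  then have ih: "Ffun x i (k+1) \<ge> 0" using Suc.hyps(1) by blast
  have "Dfun x i < Dfun x k" using D_mono[OF assms(1,2,3), of k i] Suc.prems Suc.hyps(2) assms(4) by simp
  then have "Ffun x i k > Ffun x i (k+1)" using F_step[of k x i] Suc.prems by simp
  then show ?case using ih by simp
qed

lemma F_all:
  fixes x :: real and d i k :: nat
  assumes "1 - 2/(real d+1) < x" "x<1" "0<x" "1 \<le> i" "i \<le> d" "1 \<le> k" "k \<le> d"
  shows "Ffun x i k \<ge> 0 \<and> (k \<noteq> i \<and> k \<noteq> i+1 \<longrightarrow> Ffun x i k > 0)"
proof (cases "k \<le> i")
  case True then show ?thesis using F_down[OF assms(1,2,3,5) assms(6)] by auto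
next
  case False then show ?thesis using F_up[OF assms(1,2,3,4), of k] assms(7) by auto
qed

lemma feas_bounds:
  assumes "feasible_dd d a h" "0 < a"
  shows "2 \<le> a \<and> a \<le> real d"
proof -
  have nn: "\<And>k. 0 \<le> h k" and s1: "(\<Sum>k=2..d. h k) = 1" and s2: "1/a = (\<Sum>k=2..d. h k / real k)"
    using assms unfolding feasible_dd_def degree_dist_def avg_degree_def by auto
  have "(\<Sum>k=2..d. h k / real k) \<le> (\<Sum>k=2..d. h k / 2)"
    by (intro sum_mono, rule divide_left_mono) (auto simp: nn)
  also have "\<dots> = 1/2" using s1 by (simp add: sum_divide_distrib[symmetric])
  finally have "1/a \<le> 1/2" using s2 by simp
  then have A: "2 \<le> a" using assms(2) by (simp add: divide_simps)
  have "(\<Sum>k=2..d. h k / real d) \<le> (\<Sum>k=2..d. h k / real k)"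
    by (intro sum_mono) (auto intro!: divide_left_mono simp: nn)
  moreover have "(\<Sum>k=2..d. h k / real d) = 1 / real d" using s1 by (simp add: sum_divide_distrib[symmetric])
  ultimately have "1 / real d \<le> 1/a" using s2 by simp
  moreover have "d \<noteq> 0" using s1 by (cases "d = 0") auto
  ultimately have "a \<le> real d" using assms(2) by (simp add: divide_simps)
  with A show ?thesis by simp
qed

lemma main:
  fixes d :: nat and a x :: real
  assumes "1 - 2/(real d+1) < x" "x<1" "0<x" "2 \<le> a" "a \<le> real d"
  shows "\<exists>gs. feasible_dd d a gs \<and> (\<forall>h. feasible_dd d a h \<longrightarrow>
     dd_eval d h x \<le> dd_eval d gs x \<and>
     ((\<exists>k. h k \<noteq> 0 \<and> k \<noteq> nat \<lfloor>a\<rfloor> \<and> k \<noteq> nat \<lfloor>a\<rfloor> + 1) \<longrightarrow> dd_eval d h x < dd_eval d gs x))"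
proof -
  define i where "i = nat \<lfloor>a\<rfloor>"
  have ia: "real i \<le> a" "a < real i + 1" unfolding i_def using assms(4)
    by (auto simp: of_nat_nat)
  have i2: "2 \<le> i" unfolding i_def using assms(4) by linarith
  have id: "i \<le> d" using ia assms(5) by linarith
  define \<alpha> where "\<alpha> = Dfun x i"
  define \<beta> where "\<beta> = real i * x^(i-1) - real i * Dfun x i"
  have Fk: "x^(k-1) \<le> \<alpha> + \<beta> / real k \<and> (k \<noteq> i \<and> k \<noteq> i+1 \<longrightarrow> x^(k-1) < \<alpha> + \<beta> / real k)"
    if k: "k \<in> {2..d}" for k
  proof -
    have F: "Ffun x i k \<ge> 0 \<and> (k \<noteq> i \<and> k \<noteq> i+1 \<longrightarrow> Ffun x i k > 0)"
      using F_all[OF assms(1,2,3), of i k] i2 id k by auto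
    have kp: "real k > 0" using k by auto
    have "\<alpha> + \<beta> / real k - x^(k-1) = Ffun x i k / real k"
      unfolding Ffun_def \<alpha>_def \<beta>_def using kp by (simp add: field_simps)
    then show ?thesis using F kp
      by (smt (verit, ccfv_SIG) divide_nonneg_pos divide_pos_pos)
  qed
  have sumeq: "(\<Sum>k=2..d. h k * (\<alpha> + \<beta> / real k)) = \<alpha> + \<beta> / a" if "feasible_dd d a h" for h
  proof -
    have s1: "(\<Sum>k=2..d. h k) = 1" and s2: "1/a = (\<Sum>k=2..d. h k / real k)"
      using that unfolding feasible_dd_def degree_dist_def avg_degree_def by auto
    have "(\<Sum>k=2..d. h k * (\<alpha> + \<beta> / real k)) = \<alpha> * (\<Sum>k=2..d. h k) + \<beta> * (\<Sum>k=2..d. h k / real k)"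
      by (simp add: sum_distrib_left sum.distrib algebra_simps)
    also have "\<dots> = \<alpha> + \<beta> / a" using s1 s2[symmetric] by simp
    finally show ?thesis .
  qed
  have ub: "dd_eval d h x \<le> \<alpha> + \<beta> / a" if h: "feasible_dd d a h" for h
  proof -
    have nn: "\<And>k. 0 \<le> h k" using h unfolding feasible_dd_def degree_dist_def by auto
    have "dd_eval d h x \<le> (\<Sum>k=2..d. h k * (\<alpha> + \<beta> / real k))"
      unfolding dd_eval_def by (intro sum_mono mult_left_mono) (use Fk nn in auto)
    then show ?thesis using sumeq[OF h] by simp
  qed
  have strict: "dd_eval d h x < \<alpha> + \<beta> / a" if h: "feasible_dd d a h" and hk: "h k \<noteq> 0" "k \<noteq> i" "k \<noteq> i+1" for h k
  proof -
    have nn: "\<And>k. 0 \<le> h k" and z: "\<And>k. k < 2 \<or> d < k \<Longrightarrow> h k = 0"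
      using h unfolding feasible_dd_def degree_dist_def by auto
    have kin: "k \<in> {2..d}" using z[of k] hk by force
    have hp: "h k > 0" using nn[of k] hk by simp
    have "dd_eval d h x < (\<Sum>k=2..d. h k * (\<alpha> + \<beta> / real k))"
      unfolding dd_eval_def
    proof (rule sum_strict_mono_ex1)
      show "\<forall>j\<in>{2..d}. h j * x ^ (j - 1) \<le> h j * (\<alpha> + \<beta> / real j)"
        using Fk nn by (auto intro: mult_left_mono)
      show "\<exists>j\<in>{2..d}. h j * x ^ (j - 1) < h j * (\<alpha> + \<beta> / real j)"
        using Fk[OF kin] hk hp kin by (intro bexI[of _ k]) auto
    qed simp
    then show ?thesis using sumeq[OF h] by simp
  qed
  define lam where "lam = real i * (real i + 1 - a) / a"
  define mu where "mu = (real i + 1) * (a - real i) / a"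
  have apos: "a > 0" using assms by simp
  have lm: "lam + mu = 1" unfolding lam_def mu_def using apos by (simp add: field_simps)
  have lam0: "lam \<ge> 0" unfolding lam_def using ia apos by simp
  have mu0: "mu \<ge> 0" unfolding mu_def using ia apos by simp
  have mud: "i = d \<Longrightarrow> mu = 0" unfolding mu_def using ia assms(5) by simp
  have avg: "lam / real i + mu / (real i + 1) = 1 / a"
  proof -
    have "lam / real i = (real i + 1 - a) / a" unfolding lam_def using i2 by simp
    moreover have "mu / (real i + 1) = (a - real i) / a"
    proof -
      have "real i + 1 \<noteq> 0" by linarith
      moreover have "mu = (real i + 1) * ((a - real i) / a)" by (simp add: mu_def)
      ultimately show ?thesis by simp
    qed
    ultimately have "lam / real i + mu / (real i + 1) = ((real i + 1 - a) + (a - real i)) / a"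
      by (simp only: add_divide_distrib)
    then show ?thesis by simp
  qed
  define gs where "gs = (\<lambda>k. (if k = i then lam else 0) + (if k = i+1 then mu else 0))"
  have gs_feas: "feasible_dd d a gs"
    unfolding feasible_dd_def degree_dist_def avg_degree_def
  proof (intro conjI allI impI)
    fix k show "0 \<le> gs k" unfolding gs_def using lam0 mu0 by simp
  next
    fix k assume "k < 2 \<or> d < k"
    then show "gs k = 0" unfolding gs_def using i2 id mud by auto
  next
    have "(\<Sum>k=2..d. gs k) = lam + (if i+1 \<le> d then mu else 0)"
      unfolding gs_def using i2 id by (simp add: sum.distrib)
    then show "(\<Sum>k=2..d. gs k) = 1" using lm mud id by (auto split: if_splits)
  next
    have "(\<Sum>k=2..d. gs k / real k) = (\<Sum>k=2..d. (if k = i then lam / real i else 0) + (if k = i+1 then mu / (real i + 1) else 0))"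
      unfolding gs_def by (intro sum.cong) (auto simp: add_divide_distrib)
    also have "\<dots> = lam / real i + (if i+1 \<le> d then mu / (real i + 1) else 0)"
      using i2 id by (simp add: sum.distrib)
    finally show "1 / a = (\<Sum>k=2..d. gs k / real k)" using avg mud id by (auto split: if_splits)
  qed
  have gs_val: "dd_eval d gs x = \<alpha> + \<beta> / a"
  proof -
    have "dd_eval d gs x = (\<Sum>k=2..d. gs k * (\<alpha> + \<beta> / real k))"
      unfolding dd_eval_def
    proof (intro sum.cong refl)
      fix k assume k: "k \<in> {2..d}"
      show "gs k * x ^ (k - 1) = gs k * (\<alpha> + \<beta> / real k)"
      proof (cases "k = i \<or> k = i + 1")
        case True
        have "Ffun x i k = 0"
          using True F_zero[of x i] F_step[of i x i] i2 by (auto simp: \<alpha>_def)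
        moreover have "\<alpha> + \<beta> / real k - x^(k-1) = Ffun x i k / real k"
          unfolding Ffun_def \<alpha>_def \<beta>_def using k by (simp add: field_simps)
        ultimately show ?thesis by simp
      next
        case False then show ?thesis unfolding gs_def by auto
      qed
    qed
    then show ?thesis using sumeq[OF gs_feas] by simp
  qed
  show ?thesis
    using gs_feas gs_val ub strict unfolding i_def[symmetric] by (metis order.strict_iff_order)
qed

theorem theorem3:
  fixes d :: nat and a x :: real
  assumes "0 < d" and "0 < a"
    and "1 - 2 / (real d + 1) < x" and "x < 1"
  shows "((\<exists>g. feasible_dd d a g) \<longrightarrow> (\<exists>g. maximizer_dd d a x g))
       \<and> (\<forall>g. maximizer_dd d a x g \<longrightarrow>
            (\<forall>k. k \<noteq> nat \<lfloor>a\<rfloor> \<and> k \<noteq> nat \<lfloor>a\<rfloor> + 1 \<longrightarrow> g k = 0))"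
proof -
  have x0: "0 < x"
  proof -
    have "2 / (real d + 1) \<le> 1" using assms(1) by (simp add: divide_simps)
    then show ?thesis using assms(3) by linarith
  qed
  show ?thesis
  proof (intro conjI impI allI)
    assume "\<exists>g. feasible_dd d a g"
    then obtain h where h: "feasible_dd d a h" by blast
    have b: "2 \<le> a" "a \<le> real d" using feas_bounds[OF h assms(2)] by auto
    from main[OF assms(3,4) x0 b] show "\<exists>g. maximizer_dd d a x g"
      unfolding maximizer_dd_def by blast
  next
    fix g k assume g: "maximizer_dd d a x g" and k: "k \<noteq> nat \<lfloor>a\<rfloor> \<and> k \<noteq> nat \<lfloor>a\<rfloor> + 1"
    have gf: "feasible_dd d a g" using g unfolding maximizer_dd_def by blast
    have b: "2 \<le> a" "a \<le> real d" using feas_bounds[OF gf assms(2)] by auto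
    from main[OF assms(3,4) x0 b] obtain gs where gs: "feasible_dd d a gs"
      "\<And>h. feasible_dd d a h \<Longrightarrow> (\<exists>k. h k \<noteq> 0 \<and> k \<noteq> nat \<lfloor>a\<rfloor> \<and> k \<noteq> nat \<lfloor>a\<rfloor> + 1) \<Longrightarrow> dd_eval d h x < dd_eval d gs x"
      by blast
    have "dd_eval d gs x \<le> dd_eval d g x" using g gs(1) unfolding maximizer_dd_def by blast
    then show "g k = 0" using gs(2)[OF gf] k by force
  qed
qed

end
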